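(* Let $A_1,A_2$ be bounded operators on a Hilbert space $\mathcal H$. The following are equivalent: (1) $(A_1,A_2)$ is almost normal; (2) $A_1^*+A_2z$ and $A_2^*+A_1z$ commute for every $z\in\mathbb T$; (3) $A_2^*+A_1z$ is normal for every $z\in\mathbb T$; (4) $A_1^*+A_2z$ is normal for every $z\in\mathbb T$.
   Context: A pair $(A_1,A_2)$ is almost normal if $A_1A_2=A_2A_1$ and $A_1^*A_1-A_1A_1^*=A_2^*A_2-A_2A_2^*$. *)

theory Defs
  imports "HOL-Analysis.Analysis"
begin

definition hnorm :: "('a \<Rightarrow> 'a \<Rightarrow> complex) \<Rightarrow> 'a \<Rightarrow> real" where
  "hnorm ip x = sqrt (Re (ip x x))"

definition hilbert_space :: "(complex \<Rightarrow> 'a::ab_group_add \<Rightarrow> 'a) \<Rightarrow> ('a \<Rightarrow> 'a \<Rightarrow> complex) \<Rightarrow> bool" where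
  "hilbert_space sc ip \<longleftrightarrow>
     vector_space sc \<and>
     (\<forall>x y z. ip (x + y) z = ip x z + ip y z) \<and>
     (\<forall>c x y. ip (sc c x) y = c * ip x y) \<and>
     (\<forall>x y. ip y x = cnj (ip x y)) \<and>
     (\<forall>x. 0 \<le> Re (ip x x)) \<and>
     (\<forall>x. ip x x = 0 \<longrightarrow> x = 0) \<and>
     (\<forall>X::nat \<Rightarrow> 'a. (\<forall>e>0. \<exists>N. \<forall>m\<ge>N. \<forall>n\<ge>N. hnorm ip (X m - X n) < e)
        \<longrightarrow> (\<exists>L. (\<lambda>n. hnorm ip (X n - L)) \<longlonglongrightarrow> 0))"

definition bounded_op :: "(complex \<Rightarrow> 'a::ab_group_add \<Rightarrow> 'a) \<Rightarrow> ('a \<Rightarrow> 'a \<Rightarrow> complex) \<Rightarrow> ('a \<Rightarrow> 'a) \<Rightarrow> bool" where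
  "bounded_op sc ip A \<longleftrightarrow>
     (\<forall>x y. A (x + y) = A x + A y) \<and>
     (\<forall>c x. A (sc c x) = sc c (A x)) \<and>
     (\<exists>K. \<forall>x. hnorm ip (A x) \<le> K * hnorm ip x)"

definition adj :: "('a \<Rightarrow> 'a \<Rightarrow> complex) \<Rightarrow> ('a \<Rightarrow> 'a) \<Rightarrow> ('a \<Rightarrow> 'a)" where
  "adj ip A = (THE B. \<forall>x y. ip (A x) y = ip x (B y))"

definition normal_op :: "('a \<Rightarrow> 'a \<Rightarrow> complex) \<Rightarrow> ('a \<Rightarrow> 'a) \<Rightarrow> bool" where
  "normal_op ip T \<longleftrightarrow> T \<circ> adj ip T = adj ip T \<circ> T"

definition almost_normal :: "('a \<Rightarrow> 'a \<Rightarrow> complex) \<Rightarrow> ('a::ab_group_add \<Rightarrow> 'a) \<Rightarrow> ('a \<Rightarrow> 'a) \<Rightarrow> bool" where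
  "almost_normal ip A1 A2 \<longleftrightarrow>
     A1 \<circ> A2 = A2 \<circ> A1 \<and>
     (\<lambda>x. adj ip A1 (A1 x) - A1 (adj ip A1 x)) = (\<lambda>x. adj ip A2 (A2 x) - A2 (adj ip A2 x))"

end

theory Submission
  imports Defs
begin

locale hs =
  fixes sc :: "complex \<Rightarrow> 'a::ab_group_add \<Rightarrow> 'a" and ip :: "'a \<Rightarrow> 'a \<Rightarrow> complex"
  assumes H: "hilbert_space sc ip"
begin

lemma Hs: "vector_space sc \<and>
     (\<forall>x y z. ip (x + y) z = ip x z + ip y z) \<and>
     (\<forall>c x y. ip (sc c x) y = c * ip x y) \<and>
     (\<forall>x y. ip y x = cnj (ip x y)) \<and>
     (\<forall>x. 0 \<le> Re (ip x x)) \<and>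
     (\<forall>x. ip x x = 0 \<longrightarrow> x = 0) \<and>
     (\<forall>X::nat \<Rightarrow> 'a. (\<forall>e>0. \<exists>N. \<forall>m\<ge>N. \<forall>n\<ge>N. hnorm ip (X m - X n) < e)
        \<longrightarrow> (\<exists>L. (\<lambda>n. hnorm ip (X n - L)) \<longlonglongrightarrow> 0))"
  using H unfolding hilbert_space_def .

sublocale V: vector_space sc using Hs by (rule conjunct1)

lemma ip_add_left: "ip (x + y) z = ip x z + ip y z" by (rule Hs[THEN conjunct2, THEN conjunct1, rule_format])
lemma ip_scale_left: "ip (sc c x) y = c * ip x y" by (rule Hs[THEN conjunct2, THEN conjunct2, THEN conjunct1, rule_format])
lemma ip_cnj: "ip y x = cnj (ip x y)" by (rule Hs[THEN conjunct2, THEN conjunct2, THEN conjunct2, THEN conjunct1, rule_format])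
lemma ip_pos: "0 \<le> Re (ip x x)" by (rule Hs[THEN conjunct2, THEN conjunct2, THEN conjunct2, THEN conjunct2, THEN conjunct1, rule_format])
lemma ip_def0: "ip x x = 0 \<Longrightarrow> x = 0" by (rule Hs[THEN conjunct2, THEN conjunct2, THEN conjunct2, THEN conjunct2, THEN conjunct2, THEN conjunct1, rule_format])
lemma complete: assumes "\<forall>e>0. \<exists>N. \<forall>m\<ge>N. \<forall>n\<ge>N. hnorm ip (X m - X n) < e"
  shows "\<exists>L. (\<lambda>n. hnorm ip (X n - L)) \<longlonglongrightarrow> 0"
  using mp[OF spec[OF Hs[THEN conjunct2, THEN conjunct2, THEN conjunct2, THEN conjunct2, THEN conjunct2, THEN conjunct2], of X] assms] .

lemma sqn2: "cnj c * c = (complex_of_real (cmod c))^2"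
proof -
  have "(complex_of_real (cmod c))^2 = complex_of_real ((cmod c)^2)" by simp
  also have "\<dots> = c * cnj c" by (rule complex_norm_square)
  finally show ?thesis by (simp add: mult.commute)
qed
lemma sqn1: "complex_of_real (cmod w) * complex_of_real (cmod w) = w * cnj w"
  using sqn2[of w] by (simp add: power2_eq_square mult.commute)

lemma ip_add_right: "ip x (y + z) = ip x y + ip x z"
  by (metis ip_cnj ip_add_left complex_cnj_add)
lemma ip_scale_right: "ip x (sc c y) = cnj c * ip x y"
  by (metis ip_cnj ip_scale_left complex_cnj_mult)
lemma ip_zero_left[simp]: "ip 0 y = 0"
  using ip_add_left[of 0 0 y] by simp
lemma ip_zero_right[simp]: "ip y 0 = 0"
  using ip_add_right[of y 0 0] by simp
lemma ip_minus_left: "ip (- x) y = - ip x y"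
  using ip_add_left[of x "-x" y] by (simp add: eq_neg_iff_add_eq_0 add.commute)
lemma ip_minus_right: "ip y (- x) = - ip y x"
  using ip_add_right[of y x "-x"] by (simp add: eq_neg_iff_add_eq_0 add.commute)
lemma ip_diff_left: "ip (x - y) z = ip x z - ip y z"
  using ip_add_left[of x "-y" z] ip_minus_left[of y z] by simp
lemma ip_diff_right: "ip z (x - y) = ip z x - ip z y"
  using ip_add_right[of z x "-y"] ip_minus_right[of z y] by simp

definition q where "q x = Re (ip x x)"
lemma q_nonneg: "0 \<le> q x" by (simp add: q_def ip_pos)
lemma ip_self: "ip x x = complex_of_real (q x)"
proof -
  have "Im (ip x x) = 0" using ip_cnj[of x x] by (metis cnj.sel(2) neg_equal_zero)
  thus ?thesis by (simp add: q_def complex_eq_iff)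
qed
lemma q_zero_iff: "q x = 0 \<longleftrightarrow> x = 0"
  using ip_self[of x] ip_def0[of x] by auto
lemma q_pos: "x \<noteq> 0 \<Longrightarrow> 0 < q x" using q_zero_iff q_nonneg by (metis less_eq_real_def)
lemma hnorm_q: "hnorm ip x = sqrt (q x)" by (simp add: hnorm_def q_def)

lemma ext_ip: "(\<And>x. ip x a = ip x b) \<Longrightarrow> a = b"
proof -
  assume h: "\<And>x. ip x a = ip x b"
  have "ip (a - b) (a - b) = 0" using h[of "a-b"] by (simp add: ip_diff_right)
  hence "a - b = 0" by (rule ip_def0)
  thus ?thesis by simp
qed

lemma expand: "ip (u - sc t n) (u - sc t n) = ip u u - cnj t * ip u n - t * cnj (ip u n) + t * cnj t * ip n n"
  by (simp add: ip_diff_left ip_diff_right ip_scale_left ip_scale_right ip_cnj[of n u] algebra_simps)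

lemma key: assumes "n \<noteq> 0"
  shows "ip (u - sc (ip u n / ip n n) n) (u - sc (ip u n / ip n n) n) = ip u u - complex_of_real (cmod (ip u n) ^ 2 / q n)"
proof -
  have qp: "q n > 0" using q_pos assms by blast
  have r: "cnj (complex_of_real (q n)) = complex_of_real (q n)" by simp
  show ?thesis unfolding expand ip_self[of n]
    using qp by (simp add: sqn1 field_simps power2_eq_square)
qed

lemma cs: "cmod (ip x y) \<le> hnorm ip x * hnorm ip y"
proof (cases "y = 0")
  case True thus ?thesis by (simp add: hnorm_q q_nonneg)
next
  case False
  have qp: "q y > 0" using q_pos False by blast
  have "0 \<le> q x - cmod (ip x y) ^ 2 / q y"
    using q_nonneg[of "x - sc (ip x y / ip y y) y"] key[OF False, of x]
    unfolding q_def by (simp add: ip_self[of x, symmetric])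
  hence "cmod (ip x y) ^ 2 \<le> q x * q y" using qp by (simp add: field_simps)
  hence "sqrt (cmod (ip x y) ^ 2) \<le> sqrt (q x * q y)" using real_sqrt_le_mono by blast
  thus ?thesis by (simp add: hnorm_q real_sqrt_mult)
qed

lemma q_add: "q (x + y) = q x + q y + 2 * Re (ip x y)"
proof -
  have "Re (ip y x) = Re (ip x y)" using ip_cnj[of y x] by simp
  thus ?thesis unfolding q_def by (simp add: ip_add_left ip_add_right)
qed

lemma hnorm_nonneg: "0 \<le> hnorm ip x" by (simp add: hnorm_q q_nonneg)
lemma hnorm_sq: "hnorm ip x ^ 2 = q x" by (simp add: hnorm_q q_nonneg)

lemma triangle: "hnorm ip (x + y) \<le> hnorm ip x + hnorm ip y"
proof -
  have "Re (ip x y) \<le> hnorm ip x * hnorm ip y" using cs[of x y] complex_Re_le_cmod order_trans by blast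
  hence "q (x + y) \<le> (hnorm ip x + hnorm ip y) ^ 2"
    unfolding q_add power2_sum hnorm_sq by simp
  hence "sqrt (q (x + y)) \<le> sqrt ((hnorm ip x + hnorm ip y) ^ 2)" using real_sqrt_le_mono by blast
  thus ?thesis using hnorm_nonneg[of x] hnorm_nonneg[of y] by (simp add: hnorm_q)
qed

lemma q_minus: "q (- x) = q x" by (simp add: q_def ip_minus_left ip_minus_right)
lemma hnorm_commute: "hnorm ip (x - y) = hnorm ip (y - x)"
  using q_minus[of "x - y"] by (simp add: hnorm_q)
lemma q_scale: "q (sc c x) = cmod c ^ 2 * q x"
proof -
  have "ip (sc c x) (sc c x) = complex_of_real (cmod c ^ 2) * ip x x"
    by (simp add: ip_scale_left ip_scale_right sqn2)
  thus ?thesis unfolding q_def by (simp add: ip_self)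
qed
lemma sc2: "sc 2 x = x + x" using V.scale_left_distrib[of 1 1 x] by simp

end
context hs begin
lemma riesz:
  assumes fadd: "\<And>x y. f (x + y) = f x + f y" and fsc: "\<And>c x. f (sc c x) = c * f x"
    and fb: "\<And>x. cmod (f x) \<le> C * hnorm ip x"
  shows "\<exists>w. \<forall>x. f x = ip x w"
proof (cases "\<forall>x. f x = 0")
  case True thus ?thesis by (intro exI[of _ 0]) simp
next
  case False
  then obtain x0 where fx0: "f x0 \<noteq> 0" by blast
  have f0: "f 0 = 0" using fsc[of 0 0] by simp
  have fdiff: "f (x - y) = f x - f y" for x y using fadd[of "x - y" y] by simp
  define S where "S = {q (x0 - n) | n. f n = 0}"
  define d where "d = Inf S"
  have Sne: "S \<noteq> {}" using f0 unfolding S_def by blast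
  have Sbdd: "bdd_below S" unfolding S_def bdd_below_def using q_nonneg by blast
  have dle: "d \<le> q (x0 - n)" if "f n = 0" for n
    unfolding d_def using Sbdd that by (intro cInf_lower) (auto simp: S_def)
  have d0: "0 \<le> d" unfolding d_def using Sne by (rule cInf_greatest) (auto simp: S_def q_nonneg)
  have "\<exists>n. f n = 0 \<and> q (x0 - n) < d + inverse (real (Suc k))" for k
  proof -
    have "Inf S < d + inverse (real (Suc k))" unfolding d_def by simp
    then obtain s where "s \<in> S" "s < d + inverse (real (Suc k))" using cInf_lessD[OF Sne] by blast
    thus ?thesis unfolding S_def by blast
  qed
  then obtain ns where ns0: "\<And>k. f (ns k) = 0" and ns1: "\<And>k. q (x0 - ns k) < d + inverse (real (Suc k))"
    by metis
  have bnd: "q (ns k - ns m) \<le> 2 * inverse (real (Suc k)) + 2 * inverse (real (Suc m))" for k m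
  proof -
    define a where "a = x0 - ns k"
    define b where "b = x0 - ns m"
    define mid where "mid = x0 - sc (1/2) (ns k + ns m)"
    have fm: "f (sc (1/2) (ns k + ns m)) = 0" by (simp add: fsc fadd ns0)
    have "sc 2 mid = sc 2 x0 - sc 2 (sc (1/2) (ns k + ns m))" unfolding mid_def by (rule V.scale_right_diff_distrib)
    also have "sc 2 (sc (1/2) (ns k + ns m)) = ns k + ns m" unfolding V.scale_scale by simp
    finally have ab: "a + b = sc 2 mid"
      unfolding a_def b_def sc2 by (simp add: algebra_simps)
    have "q (a + b) = 4 * q mid" unfolding ab q_scale by simp
    moreover have "d \<le> q mid" unfolding mid_def using dle[OF fm] .
    moreover have "q (a + b) + q (a - b) = 2 * q a + 2 * q b"
      using q_add[of a b] q_add[of a "- b"] q_minus[of b]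
      by (simp add: ip_minus_right)
    moreover have "q (a - b) = q (ns k - ns m)" unfolding a_def b_def using q_minus[of "ns k - ns m"] by simp
    moreover have "q a < d + inverse (real (Suc k))" "q b < d + inverse (real (Suc m))"
      using ns1[of k] ns1[of m] unfolding a_def b_def by simp_all
    ultimately show ?thesis by linarith
  qed
  have "\<exists>L. (\<lambda>n. hnorm ip (ns n - L)) \<longlonglongrightarrow> 0"
  proof (rule complete, intro allI impI)
    fix e :: real assume e: "e > 0"
    then obtain N where N: "inverse (real (Suc N)) < e^2 / 4"
      using reals_Archimedean[of "e^2/4"] e by auto
    show "\<exists>N. \<forall>m\<ge>N. \<forall>n\<ge>N. hnorm ip (ns m - ns n) < e"
    proof (intro exI allI impI)
      fix m n assume mn: "N \<le> m" "N \<le> n"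
      have "inverse (real (Suc m)) \<le> inverse (real (Suc N))" "inverse (real (Suc n)) \<le> inverse (real (Suc N))"
        using mn by (auto simp: field_simps)
      hence "q (ns m - ns n) < e^2" using bnd[of m n] N by linarith
      hence "sqrt (q (ns m - ns n)) < sqrt (e^2)" using real_sqrt_less_mono by blast
      thus "hnorm ip (ns m - ns n) < e" using e by (simp add: hnorm_q)
    qed
  qed
  then obtain L where lim: "(\<lambda>n. hnorm ip (ns n - L)) \<longlonglongrightarrow> 0" by blast
  have fL: "f L = 0"
  proof -
    have "(\<lambda>n. C * hnorm ip (ns n - L)) \<longlonglongrightarrow> 0" using tendsto_mult_right_zero[OF lim] by simp
    moreover have "cmod (f L) \<le> C * hnorm ip (ns n - L)" for n
      using fb[of "L - ns n"] fdiff[of L "ns n"] ns0[of n] hnorm_commute[of L "ns n"] by simp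
    ultimately have "cmod (f L) \<le> 0" by (intro LIMSEQ_le_const) auto
    thus ?thesis by simp
  qed
  have minL: "q (x0 - L) \<le> d"
  proof -
    have "(\<lambda>k. sqrt (d + inverse (real (Suc k))) + hnorm ip (ns k - L)) \<longlonglongrightarrow> sqrt d + 0"
      by (intro tendsto_add tendsto_real_sqrt LIMSEQ_inverse_real_of_nat_add lim)
    moreover have "hnorm ip (x0 - L) \<le> sqrt (d + inverse (real (Suc k))) + hnorm ip (ns k - L)" for k
    proof -
      have "hnorm ip (x0 - L) \<le> hnorm ip (x0 - ns k) + hnorm ip (ns k - L)"
        using triangle[of "x0 - ns k" "ns k - L"] by simp
      moreover have "hnorm ip (x0 - ns k) \<le> sqrt (d + inverse (real (Suc k)))"
        unfolding hnorm_q using ns1[of k] by simp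
      ultimately show ?thesis by linarith
    qed
    ultimately have "hnorm ip (x0 - L) \<le> sqrt d" by (intro LIMSEQ_le_const[where X="\<lambda>k. sqrt (d + inverse (real (Suc k))) + hnorm ip (ns k - L)"]) auto
    hence "hnorm ip (x0 - L) ^ 2 \<le> sqrt d ^ 2" using hnorm_nonneg power_mono by blast
    thus ?thesis using d0 by (simp add: hnorm_sq)
  qed
  define u where "u = x0 - L"
  have fu: "f u \<noteq> 0" unfolding u_def fdiff fL using fx0 by simp
  have u0: "u \<noteq> 0" using fu f0 by auto
  have orth: "ip u n = 0" if fn: "f n = 0" for n
  proof (cases "n = 0")
    case True thus ?thesis by simp
  next
    case False
    define t where "t = ip u n / ip n n"
    have "f (L + sc t n) = 0" by (simp add: fadd fsc fL fn)
    hence "q u \<le> q (x0 - (L + sc t n))" using minL dle[of "L + sc t n"] unfolding u_def by linarith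
    moreover have "x0 - (L + sc t n) = u - sc t n" unfolding u_def by simp
    ultimately have "q u \<le> q u - cmod (ip u n) ^ 2 / q n"
      using key[OF False, of u] unfolding q_def t_def by (simp add: ip_self[of u])
    hence "cmod (ip u n) ^ 2 / q n \<le> 0" by simp
    hence "cmod (ip u n) ^ 2 \<le> 0" using q_pos[OF False] by (simp add: divide_le_0_iff)
    thus ?thesis by simp
  qed
  have ipuu: "ip u u \<noteq> 0" using ip_def0 u0 by blast
  show ?thesis
  proof (intro exI allI)
    fix x
    define c where "c = f x / f u"
    have "f (x - sc c u) = 0" unfolding fdiff fsc c_def using fu by simp
    hence "ip u (x - sc c u) = 0" by (rule orth)
    hence "ip (x - sc c u) u = 0" using ip_cnj[of "x - sc c u" u] by simp
    hence "ip x u = c * ip u u" by (simp add: ip_diff_left ip_scale_left)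
    thus "f x = ip x (sc (cnj (f u / ip u u)) u)"
      unfolding ip_scale_right c_def using fu ipuu by (simp add: field_simps)
  qed
qed

end
context hs begin

definition rel where "rel A B \<longleftrightarrow> (\<forall>x y. ip (A x) y = ip x (B y))"

lemma adj_eq: "rel A B \<Longrightarrow> adj ip A = B"
  unfolding adj_def rel_def
proof (rule the_equality)
  fix B' assume "\<forall>x y. ip (A x) y = ip x (B y)" "\<forall>x y. ip (A x) y = ip x (B' y)"
  thus "B' = B" by (intro ext ext_ip) metis
qed

lemma adj_ex: assumes "bounded_op sc ip A" shows "rel A (adj ip A)"
proof -
  obtain K where K: "\<And>x. hnorm ip (A x) \<le> K * hnorm ip x" using assms unfolding bounded_op_def by blast
  have Aadd: "A (x + y) = A x + A y" and Asc: "A (sc c x) = sc c (A x)" for x y c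
    using assms unfolding bounded_op_def by blast+
  have "\<forall>y. \<exists>w. \<forall>x. ip (A x) y = ip x w"
  proof
    fix y
    show "\<exists>w. \<forall>x. ip (A x) y = ip x w"
    proof (rule riesz[where C = "K * hnorm ip y"])
      show "ip (A (x + x')) y = ip (A x) y + ip (A x') y" for x x' by (simp add: Aadd ip_add_left)
      show "ip (A (sc c x)) y = c * ip (A x) y" for c x by (simp add: Asc ip_scale_left)
      show "cmod (ip (A x) y) \<le> K * hnorm ip y * hnorm ip x" for x
      proof -
        have "cmod (ip (A x) y) \<le> hnorm ip (A x) * hnorm ip y" by (rule cs)
        also have "\<dots> \<le> K * hnorm ip x * hnorm ip y" using K[of x] hnorm_nonneg[of y] by (rule mult_right_mono)
        finally show ?thesis by (simp add: algebra_simps)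
      qed
    qed
  qed
  then obtain B where "\<forall>y x. ip (A x) y = ip x (B y)" by metis
  hence "rel A B" unfolding rel_def by blast
  thus ?thesis using adj_eq by simp
qed

lemma rel_lin: assumes "rel A B" shows "B (y + z) = B y + B z" "B (sc c y) = sc c (B y)"
proof -
  have h: "ip (A x) y = ip x (B y)" for x y using assms unfolding rel_def by blast
  show "B (y + z) = B y + B z" by (rule ext_ip) (simp only: ip_add_right h[symmetric])
  show "B (sc c y) = sc c (B y)" by (rule ext_ip) (simp only: ip_scale_right h[symmetric])
qed

lemma rel_sym: "rel A B \<Longrightarrow> rel B A"
  unfolding rel_def by (metis ip_cnj)

lemma rel_comp: "rel A B \<Longrightarrow> rel C D \<Longrightarrow> rel (A \<circ> C) (D \<circ> B)"
  unfolding rel_def by simp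

lemma rel_sum: "rel A B \<Longrightarrow> rel C D \<Longrightarrow> rel (\<lambda>x. A x + sc z (C x)) (\<lambda>x. B x + sc (cnj z) (D x))"
  unfolding rel_def by (simp add: ip_add_left ip_add_right ip_scale_left ip_scale_right)

lemma sc2z: "sc 2 b = 0 \<Longrightarrow> b = 0" by simp

lemma poly2: assumes h: "\<And>z. cmod z = 1 \<Longrightarrow> a1 + sc z b1 + sc (z*z) c1 = a2 + sc z b2 + sc (z*z) c2"
  shows "a1 = a2 \<and> b1 = b2 \<and> c1 = c2"
proof -
  define a b c where "a = a1 - a2" and "b = b1 - b2" and "c = c1 - c2"
  have e: "a + sc z b + sc (z*z) c = 0" if "cmod z = 1" for z
    using h[OF that] unfolding a_def b_def c_def by (simp add: V.scale_right_diff_distrib algebra_simps)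
  have e1: "a + b + c = 0" using e[of 1] by simp
  have e2: "a - b + c = 0" using e[of "-1"] by simp
  have e3: "a + sc \<i> b - c = 0" using e[of \<i>] by simp
  have "sc 2 b = (a + b + c) - (a - b + c)" unfolding sc2 by (simp add: algebra_simps)
  hence b0: "b = 0" using e1 e2 by simp
  have "sc 2 a = (a + b + c) + (a + sc \<i> b - c)" unfolding sc2 b0 by (simp add: algebra_simps)
  hence a0: "a = 0" using e1 e3 by simp
  have c0: "c = 0" using e1 a0 b0 by simp
  show ?thesis using a0 b0 c0 unfolding a_def b_def c_def by simp
qed

lemma polyc: assumes h: "\<And>z. cmod z = 1 \<Longrightarrow> a1 + sc z b1 + sc (cnj z) c1 = a2 + sc z b2 + sc (cnj z) c2"
  shows "a1 = a2 \<and> b1 = b2 \<and> c1 = c2"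
proof -
  define a b c where "a = a1 - a2" and "b = b1 - b2" and "c = c1 - c2"
  have e: "a + sc z b + sc (cnj z) c = 0" if "cmod z = 1" for z
    using h[OF that] unfolding a_def b_def c_def by (simp add: V.scale_right_diff_distrib algebra_simps)
  have e1: "a + b + c = 0" using e[of 1] by simp
  have e2: "a - b - c = 0" using e[of "-1"] by simp
  have e3: "a + sc \<i> b - sc \<i> c = 0" using e[of \<i>] by simp
  have "sc 2 a = (a + b + c) + (a - b - c)" unfolding sc2 by (simp add: algebra_simps)
  hence a0: "a = 0" using e1 e2 by simp
  have "sc \<i> (b - c) = 0" using e3 a0 by (simp add: V.scale_right_diff_distrib)
  hence bc: "b = c" by simp
  have "sc 2 b = 0" using e1 a0 bc sc2 by simp
  hence b0: "b = 0" by simp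
  show ?thesis using a0 b0 bc unfolding a_def b_def c_def by simp
qed

end

lemma grp: fixes a b c d :: "'b::ab_group_add" shows "a - b = c - d \<longleftrightarrow> a + d = c + b"
proof
  assume "a - b = c - d" then have "a - b + (b + d) = c - d + (b + d)" by simp
  thus "a + d = c + b" by (simp add: algebra_simps)
next
  assume "a + d = c + b" then have "a + d - (b + d) = c + b - (b + d)" by simp
  thus "a - b = c - d" by (simp add: algebra_simps)
qed

context hs begin

lemma main:
  assumes b1: "bounded_op sc ip A1" and b2: "bounded_op sc ip A2"
  shows "(almost_normal ip A1 A2 \<longleftrightarrow>
            (\<forall>z. cmod z = 1 \<longrightarrow>
               (\<lambda>x. adj ip A1 x + sc z (A2 x)) \<circ> (\<lambda>x. adj ip A2 x + sc z (A1 x))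
             = (\<lambda>x. adj ip A2 x + sc z (A1 x)) \<circ> (\<lambda>x. adj ip A1 x + sc z (A2 x))))
       \<and> (almost_normal ip A1 A2 \<longleftrightarrow>
            (\<forall>z. cmod z = 1 \<longrightarrow> normal_op ip (\<lambda>x. adj ip A2 x + sc z (A1 x))))
       \<and> (almost_normal ip A1 A2 \<longleftrightarrow>
            (\<forall>z. cmod z = 1 \<longrightarrow> normal_op ip (\<lambda>x. adj ip A1 x + sc z (A2 x))))"
proof -
  define B1 B2 where "B1 = adj ip A1" and "B2 = adj ip A2"
  have r1: "rel A1 B1" and r2: "rel A2 B2" using adj_ex b1 b2 by (simp_all add: B1_def B2_def)
  have la1: "A1 (u + sc z v) = A1 u + sc z (A1 v)" for u v z using b1 unfolding bounded_op_def by simp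
  have la2: "A2 (u + sc z v) = A2 u + sc z (A2 v)" for u v z using b2 unfolding bounded_op_def by simp
  have lb1: "B1 (u + sc z v) = B1 u + sc z (B1 v)" for u v z using rel_lin[OF r1] by simp
  have lb2: "B2 (u + sc z v) = B2 u + sc z (B2 v)" for u v z using rel_lin[OF r2] by simp
  have commB: "B1 \<circ> B2 = B2 \<circ> B1" if "A1 \<circ> A2 = A2 \<circ> A1"
  proof -
    have "B2 \<circ> B1 = adj ip (A1 \<circ> A2)" using adj_eq[OF rel_comp[OF r1 r2]] by simp
    also have "\<dots> = adj ip (A2 \<circ> A1)" using that by simp
    also have "\<dots> = B1 \<circ> B2" using adj_eq[OF rel_comp[OF r2 r1]] by simp
    finally show ?thesis by simp
  qed
  define P where "P x \<longleftrightarrow> B1 (B2 x) = B2 (B1 x) \<and> B1 (A1 x) + A2 (B2 x) = B2 (A2 x) + A1 (B1 x)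
     \<and> A2 (A1 x) = A1 (A2 x)" for x
  have AN: "almost_normal ip A1 A2 \<longleftrightarrow> (\<forall>x. P x)"
  proof
    assume an: "almost_normal ip A1 A2"
    hence c: "A1 \<circ> A2 = A2 \<circ> A1" and d: "(\<lambda>x. B1 (A1 x) - A1 (B1 x)) = (\<lambda>x. B2 (A2 x) - A2 (B2 x))"
      unfolding almost_normal_def B1_def B2_def by blast+
    show "\<forall>x. P x"
    proof
      fix x
      have "B1 (A1 x) - A1 (B1 x) = B2 (A2 x) - A2 (B2 x)" using fun_cong[OF d, of x] by simp
      hence "B1 (A1 x) + A2 (B2 x) = B2 (A2 x) + A1 (B1 x)" using grp by blast
      moreover have "A2 (A1 x) = A1 (A2 x)" using fun_cong[OF c, of x] by simp
      moreover have "B1 (B2 x) = B2 (B1 x)" using fun_cong[OF commB[OF c], of x] by simp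
      ultimately show "P x" unfolding P_def by blast
    qed
  next
    assume p: "\<forall>x. P x"
    have "A1 \<circ> A2 = A2 \<circ> A1" using p unfolding P_def by (auto intro!: ext)
    moreover have "(\<lambda>x. B1 (A1 x) - A1 (B1 x)) = (\<lambda>x. B2 (A2 x) - A2 (B2 x))"
      using p unfolding P_def by (intro ext) (simp add: grp)
    ultimately show "almost_normal ip A1 A2" unfolding almost_normal_def B1_def B2_def by blast
  qed
  have e2L: "(\<lambda>x. B1 x + sc z (A2 x)) \<circ> (\<lambda>x. B2 x + sc z (A1 x))
     = (\<lambda>x. B1 (B2 x) + sc z (B1 (A1 x) + A2 (B2 x)) + sc (z*z) (A2 (A1 x)))" for z
    by (rule ext) (simp add: lb1 la2 V.scale_right_distrib add.assoc)
  have e2R: "(\<lambda>x. B2 x + sc z (A1 x)) \<circ> (\<lambda>x. B1 x + sc z (A2 x))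
     = (\<lambda>x. B2 (B1 x) + sc z (B2 (A2 x) + A1 (B1 x)) + sc (z*z) (A1 (A2 x)))" for z
    by (rule ext) (simp add: lb2 la1 V.scale_right_distrib add.assoc)
  have S2: "(\<forall>z. cmod z = 1 \<longrightarrow>
               (\<lambda>x. B1 x + sc z (A2 x)) \<circ> (\<lambda>x. B2 x + sc z (A1 x))
             = (\<lambda>x. B2 x + sc z (A1 x)) \<circ> (\<lambda>x. B1 x + sc z (A2 x))) \<longleftrightarrow> (\<forall>x. P x)"
  proof
    assume h: "\<forall>z. cmod z = 1 \<longrightarrow>
               (\<lambda>x. B1 x + sc z (A2 x)) \<circ> (\<lambda>x. B2 x + sc z (A1 x))
             = (\<lambda>x. B2 x + sc z (A1 x)) \<circ> (\<lambda>x. B1 x + sc z (A2 x))"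
    show "\<forall>x. P x"
    proof
      fix x
      have "B1 (B2 x) = B2 (B1 x) \<and> B1 (A1 x) + A2 (B2 x) = B2 (A2 x) + A1 (B1 x) \<and> A2 (A1 x) = A1 (A2 x)"
      proof (rule poly2)
        fix z :: complex assume "cmod z = 1"
        hence "(\<lambda>x. B1 x + sc z (A2 x)) \<circ> (\<lambda>x. B2 x + sc z (A1 x))
             = (\<lambda>x. B2 x + sc z (A1 x)) \<circ> (\<lambda>x. B1 x + sc z (A2 x))" using h by blast
        from fun_cong[OF this[unfolded e2L e2R], of x]
        show "B1 (B2 x) + sc z (B1 (A1 x) + A2 (B2 x)) + sc (z*z) (A2 (A1 x)) =
              B2 (B1 x) + sc z (B2 (A2 x) + A1 (B1 x)) + sc (z*z) (A1 (A2 x))" by simp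
      qed
      thus "P x" unfolding P_def .
    qed
  next
    assume p: "\<forall>x. P x"
    show "\<forall>z. cmod z = 1 \<longrightarrow>
               (\<lambda>x. B1 x + sc z (A2 x)) \<circ> (\<lambda>x. B2 x + sc z (A1 x))
             = (\<lambda>x. B2 x + sc z (A1 x)) \<circ> (\<lambda>x. B1 x + sc z (A2 x))"
      unfolding e2L e2R using p unfolding P_def by simp
  qed
  have zz: "z * cnj z = 1" "cnj z * z = 1" if "cmod z = 1" for z
    using complex_norm_square[of z] that by (simp_all add: mult.commute)
  have S3: "(\<forall>z. cmod z = 1 \<longrightarrow> normal_op ip (\<lambda>x. B2 x + sc z (A1 x))) \<longleftrightarrow> (\<forall>x. P x)"
  proof -
    have adjT: "adj ip (\<lambda>x. B2 x + sc z (A1 x)) = (\<lambda>x. A2 x + sc (cnj z) (B1 x))" for z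
      by (rule adj_eq, rule rel_sum[OF rel_sym[OF r2] r1])
    have eL: "(\<lambda>x. B2 x + sc z (A1 x)) \<circ> (\<lambda>x. A2 x + sc (cnj z) (B1 x))
      = (\<lambda>x. (B2 (A2 x) + A1 (B1 x)) + sc z (A1 (A2 x)) + sc (cnj z) (B2 (B1 x)))" if "cmod z = 1" for z
      by (rule ext) (simp add: lb2 la1 V.scale_right_distrib zz[OF that] add_ac)
    have eR: "(\<lambda>x. A2 x + sc (cnj z) (B1 x)) \<circ> (\<lambda>x. B2 x + sc z (A1 x))
      = (\<lambda>x. (A2 (B2 x) + B1 (A1 x)) + sc z (A2 (A1 x)) + sc (cnj z) (B1 (B2 x)))" if "cmod z = 1" for z
      by (rule ext) (simp add: lb1 la2 V.scale_right_distrib zz[OF that] add_ac)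
    show ?thesis
    proof
      assume h: "\<forall>z. cmod z = 1 \<longrightarrow> normal_op ip (\<lambda>x. B2 x + sc z (A1 x))"
      show "\<forall>x. P x"
      proof
        fix x
        have "B2 (A2 x) + A1 (B1 x) = A2 (B2 x) + B1 (A1 x) \<and> A1 (A2 x) = A2 (A1 x) \<and> B2 (B1 x) = B1 (B2 x)"
        proof (rule polyc)
          fix z :: complex assume z: "cmod z = 1"
          hence "normal_op ip (\<lambda>x. B2 x + sc z (A1 x))" using h by blast
          from fun_cong[OF this[unfolded normal_op_def adjT eL[OF z] eR[OF z]], of x]
          show "B2 (A2 x) + A1 (B1 x) + sc z (A1 (A2 x)) + sc (cnj z) (B2 (B1 x)) =
                A2 (B2 x) + B1 (A1 x) + sc z (A2 (A1 x)) + sc (cnj z) (B1 (B2 x))" by simp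
        qed
        thus "P x" unfolding P_def by (metis add.commute)
      qed
    next
      assume p: "\<forall>x. P x"
      show "\<forall>z. cmod z = 1 \<longrightarrow> normal_op ip (\<lambda>x. B2 x + sc z (A1 x))"
      proof (intro allI impI)
        fix z :: complex assume z: "cmod z = 1"
        show "normal_op ip (\<lambda>x. B2 x + sc z (A1 x))"
          unfolding normal_op_def adjT eL[OF z] eR[OF z] using p unfolding P_def
          by (auto intro!: ext simp: add.commute)
      qed
    qed
  qed
  have S4: "(\<forall>z. cmod z = 1 \<longrightarrow> normal_op ip (\<lambda>x. B1 x + sc z (A2 x))) \<longleftrightarrow> (\<forall>x. P x)"
  proof -
    have adjT: "adj ip (\<lambda>x. B1 x + sc z (A2 x)) = (\<lambda>x. A1 x + sc (cnj z) (B2 x))" for z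
      by (rule adj_eq, rule rel_sum[OF rel_sym[OF r1] r2])
    have eL: "(\<lambda>x. B1 x + sc z (A2 x)) \<circ> (\<lambda>x. A1 x + sc (cnj z) (B2 x))
      = (\<lambda>x. (B1 (A1 x) + A2 (B2 x)) + sc z (A2 (A1 x)) + sc (cnj z) (B1 (B2 x)))" if "cmod z = 1" for z
      by (rule ext) (simp add: lb1 la2 V.scale_right_distrib zz[OF that] add_ac)
    have eR: "(\<lambda>x. A1 x + sc (cnj z) (B2 x)) \<circ> (\<lambda>x. B1 x + sc z (A2 x))
      = (\<lambda>x. (A1 (B1 x) + B2 (A2 x)) + sc z (A1 (A2 x)) + sc (cnj z) (B2 (B1 x)))" if "cmod z = 1" for z
      by (rule ext) (simp add: lb2 la1 V.scale_right_distrib zz[OF that] add_ac)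
    show ?thesis
    proof
      assume h: "\<forall>z. cmod z = 1 \<longrightarrow> normal_op ip (\<lambda>x. B1 x + sc z (A2 x))"
      show "\<forall>x. P x"
      proof
        fix x
        have "B1 (A1 x) + A2 (B2 x) = A1 (B1 x) + B2 (A2 x) \<and> A2 (A1 x) = A1 (A2 x) \<and> B1 (B2 x) = B2 (B1 x)"
        proof (rule polyc)
          fix z :: complex assume z: "cmod z = 1"
          hence "normal_op ip (\<lambda>x. B1 x + sc z (A2 x))" using h by blast
          from fun_cong[OF this[unfolded normal_op_def adjT eL[OF z] eR[OF z]], of x]
          show "B1 (A1 x) + A2 (B2 x) + sc z (A2 (A1 x)) + sc (cnj z) (B1 (B2 x)) =
                A1 (B1 x) + B2 (A2 x) + sc z (A1 (A2 x)) + sc (cnj z) (B2 (B1 x))" by simp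
        qed
        thus "P x" unfolding P_def by (metis add.commute)
      qed
    next
      assume p: "\<forall>x. P x"
      show "\<forall>z. cmod z = 1 \<longrightarrow> normal_op ip (\<lambda>x. B1 x + sc z (A2 x))"
      proof (intro allI impI)
        fix z :: complex assume z: "cmod z = 1"
        show "normal_op ip (\<lambda>x. B1 x + sc z (A2 x))"
          unfolding normal_op_def adjT eL[OF z] eR[OF z] using p unfolding P_def
          by (auto intro!: ext simp: add.commute)
      qed
    qed
  qed
  show ?thesis using AN S2 S3 S4 unfolding B1_def B2_def by blast
qed

end

theorem lemma4p7:
  fixes sc :: "complex \<Rightarrow> 'a::ab_group_add \<Rightarrow> 'a"
    and ip :: "'a \<Rightarrow> 'a \<Rightarrow> complex"
    and A1 A2 :: "'a \<Rightarrow> 'a"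
  assumes "hilbert_space sc ip"
    and "bounded_op sc ip A1" and "bounded_op sc ip A2"
  shows "(almost_normal ip A1 A2 \<longleftrightarrow>
            (\<forall>z. cmod z = 1 \<longrightarrow>
               (\<lambda>x. adj ip A1 x + sc z (A2 x)) \<circ> (\<lambda>x. adj ip A2 x + sc z (A1 x))
             = (\<lambda>x. adj ip A2 x + sc z (A1 x)) \<circ> (\<lambda>x. adj ip A1 x + sc z (A2 x))))
       \<and> (almost_normal ip A1 A2 \<longleftrightarrow>
            (\<forall>z. cmod z = 1 \<longrightarrow> normal_op ip (\<lambda>x. adj ip A2 x + sc z (A1 x))))
       \<and> (almost_normal ip A1 A2 \<longleftrightarrow>
            (\<forall>z. cmod z = 1 \<longrightarrow> normal_op ip (\<lambda>x. adj ip A1 x + sc z (A2 x))))"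
    using hs.main[OF hs.intro[OF assms(1)] assms(2) assms(3)] .

end
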